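(* Consider the algorithm OMM run on a matroid bandit $(M,P)$, and fix any episode $t\ge 1$. Let $\pi_t$ be a bijection given for the bases $A^*$ and $A^t$ (with the orderings described in the context) with the properties that $\{a^t_1,\dots,a^t_{k-1},a^*_{\pi_t(k)}\}\in\mathcal I$ for all $k$ and $\pi_t(k)=i$ whenever $a^t_k=a^*_i$. Define $\mathbb 1_{e,k}(t)=\mathbf 1[\exists i: a^t_i=e,\ \pi_t(i)=k]$. Then, with $w\sim P$ independent of $A^t$, $$\mathbb E_{w}\big[f(A^*,w)-f(A^t,w)\big]\le\sum_{e\in\bar A^*}\sum_{k=1}^{K_e}\Delta_{e,k}\,\mathbb 1_{e,k}(t).$$ Moreover, whenever $\mathbb 1_{e,k}(t)=1$ we have $U_t(e)\ge U_t(a^*_k)$; and $$\sum_{e\in\bar A^*}\sum_{k=1}^{K_e}\mathbb 1_{e,k}(t)\le K,\qquad \sum_{k=1}^{K_e}\mathbb 1_{e,k}(t)\le 1\ \text{ for every } e\in\bar A^*.$$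
   Context: A matroid $M=(E,\mathcal I)$ has ground set $E=\{1,\dots,L\}$ and rank $K$ (all bases, i.e. maximal independent sets, have cardinality $K$). For $X\in\mathcal I$ let $E(X)=\{e\in E\setminus X: X\cup\{e\}\in\mathcal I\}$. For $A\subseteq E$ and $w\in\mathbb R^L$ let $f(A,w)=\sum_{e\in A}w(e)$. A matroid bandit is a pair $(M,P)$ where $M$ is a known matroid and $P$ is an unknown probability distribution on $[0,1]^L$ (no independence between coordinates is assumed); $\bar w=\mathbb E_{w\sim P}[w]$. Weight vectors $w_0,w_1,w_2,\dots$ are drawn i.i.d. from $P$. $A^*=\{a^*_1,\dots,a^*_K\}$ is a fixed basis maximizing $f(A,\bar w)$ over $A\in\mathcal I$, indexed so that $\bar w(a^*_1)\ge\dots\ge\bar w(a^*_K)$; $\bar A^*=E\setminus A^*$ is the set of suboptimal items. For $e\in\bar A^*$ and $k\in\{1,\dots,K\}$, $\Delta_{e,k}=\bar w(a^*_k)-\bar w(e)$, and $K_e=|\{k:\Delta_{e,k}>0\}|$ (so $\Delta_{e,k}>0$ iff $k\le K_e$). Algorithm OMM (Optimistic Matroid Maximization): Initialization: observe $w_0$, set $\hat w_{e,1}=w_0(e)$ and $T_e(0)=1$ for all $e\in E$. For episodes $t=1,\dots,n$: compute $U_t(e)=\hat w_{e,T_e(t-1)}+c_{t-1,T_e(t-1)}$ for all $e$, where $c_{t,s}=\sqrt{2\log(t)/s}$ (with $c_{0,s}=0$); order the items as $e^t_1,\dots,e^t_L$ with $U_t(e^t_1)\ge\dots\ge U_t(e^t_L)$;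 start with $A^t=\emptyset$ and for $i=1,\dots,L$ add $e^t_i$ to $A^t$ if $e^t_i\in E(A^t)$. Then observe $w_t(e)$ for all $e\in A^t$ (semi-bandit feedback); set $T_e(t)=T_e(t-1)+\mathbf 1[e\in A^t]$, and for $e\in A^t$ update $\hat w_{e,T_e(t)}=\big(T_e(t-1)\hat w_{e,T_e(t-1)}+w_t(e)\big)/T_e(t)$; thus $\hat w_{e,s}$ is the average of the first $s$ observed weights of item $e$ and $T_e(t)$ is the number of observations of $e$ after episode $t$. The chosen basis is written $A^t=\{a^t_1,\dots,a^t_K\}$, where $a^t_k$ is the $k$-th item added to $A^t$ in episode $t$. *)

theory Defs
  imports "HOL-Probability.Probability"
begin

definition matroid :: "'a set \<Rightarrow> 'a set set \<Rightarrow> bool" where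
  "matroid E Ind \<longleftrightarrow> finite E \<and> (\<forall>X\<in>Ind. X \<subseteq> E) \<and> {} \<in> Ind
     \<and> (\<forall>X Y. Y \<in> Ind \<longrightarrow> X \<subseteq> Y \<longrightarrow> X \<in> Ind)
     \<and> (\<forall>X Y. X \<in> Ind \<longrightarrow> Y \<in> Ind \<longrightarrow> card X < card Y \<longrightarrow> (\<exists>e\<in>Y - X. insert e X \<in> Ind))"

definition basis :: "'a set \<Rightarrow> 'a set set \<Rightarrow> 'a set \<Rightarrow> bool" where
  "basis E Ind B \<longleftrightarrow> B \<in> Ind \<and> (\<forall>e\<in>E - B. insert e B \<notin> Ind)"

definition ext_set :: "'a set \<Rightarrow> 'a set set \<Rightarrow> 'a set \<Rightarrow> 'a set" where
  "ext_set E Ind X = {e \<in> E - X. insert e X \<in> Ind}"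

definition fw :: "'a set \<Rightarrow> ('a \<Rightarrow> real) \<Rightarrow> real" where
  "fw A w = (\<Sum>e\<in>A. w e)"

fun greedy_aux :: "'a set \<Rightarrow> 'a set set \<Rightarrow> 'a list \<Rightarrow> 'a list \<Rightarrow> 'a list" where
  "greedy_aux E Ind acc [] = acc"
| "greedy_aux E Ind acc (e # es) =
     greedy_aux E Ind (if e \<in> ext_set E Ind (set acc) then acc @ [e] else acc) es"

definition greedy :: "'a set \<Rightarrow> 'a set set \<Rightarrow> 'a list \<Rightarrow> 'a list" where
  "greedy E Ind xs = greedy_aux E Ind [] xs"

definition cconf :: "nat \<Rightarrow> nat \<Rightarrow> real" where
  "cconf t s = (if t = 0 then 0 else sqrt (2 * ln (real t) / real s))"

text \<open>State after episode t: (T_e(t), current empirical mean of e).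
  Parameters: ground set E = {1..L}, independent sets Ind, tie-breaking ordering rule
  ord (ord t U lists the items in decreasing order of U), and the realized weights ws.\<close>
fun omm_state :: "nat \<Rightarrow> nat set set \<Rightarrow> (nat \<Rightarrow> (nat \<Rightarrow> real) \<Rightarrow> nat list)
     \<Rightarrow> (nat \<Rightarrow> nat \<Rightarrow> real) \<Rightarrow> nat \<Rightarrow> (nat \<Rightarrow> nat) \<times> (nat \<Rightarrow> real)" where
  "omm_state L Ind ord ws 0 = ((\<lambda>e. 1), (\<lambda>e. ws 0 e))"
| "omm_state L Ind ord ws (Suc t) =
     (let (T, W) = omm_state L Ind ord ws t;
          U = (\<lambda>e. W e + cconf t (T e));
          A = set (greedy {1..L} Ind (ord (Suc t) U));
          T' = (\<lambda>e. T e + (if e \<in> A then 1 else 0));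
          W' = (\<lambda>e. if e \<in> A then (real (T e) * W e + ws (Suc t) e) / real (T' e) else W e)
      in (T', W'))"

definition omm_U :: "nat \<Rightarrow> nat set set \<Rightarrow> (nat \<Rightarrow> (nat \<Rightarrow> real) \<Rightarrow> nat list)
     \<Rightarrow> (nat \<Rightarrow> nat \<Rightarrow> real) \<Rightarrow> nat \<Rightarrow> nat \<Rightarrow> real" where
  "omm_U L Ind ord ws t e =
     (let (T, W) = omm_state L Ind ord ws (t - 1) in W e + cconf (t - 1) (T e))"

text \<open>The chosen basis A^t as the list [a^t_1, ..., a^t_K] in order of addition.\<close>
definition omm_A :: "nat \<Rightarrow> nat set set \<Rightarrow> (nat \<Rightarrow> (nat \<Rightarrow> real) \<Rightarrow> nat list)
     \<Rightarrow> (nat \<Rightarrow> nat \<Rightarrow> real) \<Rightarrow> nat \<Rightarrow> nat list" where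
  "omm_A L Ind ord ws t = greedy {1..L} Ind (ord t (omm_U L Ind ord ws t))"

definition valid_order :: "nat \<Rightarrow> (nat \<Rightarrow> (nat \<Rightarrow> real) \<Rightarrow> nat list) \<Rightarrow> bool" where
  "valid_order L ord \<longleftrightarrow> (\<forall>t U. set (ord t U) = {1..L} \<and> distinct (ord t U)
      \<and> sorted_wrt (\<lambda>x y. U x \<ge> U y) (ord t U))"

definition gap :: "(nat \<Rightarrow> real) \<Rightarrow> nat list \<Rightarrow> nat \<Rightarrow> nat \<Rightarrow> real" where
  "gap wbar astar e k = wbar (astar ! (k - 1)) - wbar e"

definition Kgap :: "(nat \<Rightarrow> real) \<Rightarrow> nat list \<Rightarrow> nat \<Rightarrow> nat" where
  "Kgap wbar astar e = card {k \<in> {1..length astar}. gap wbar astar e k > 0}"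

definition ind_ek :: "nat list \<Rightarrow> (nat \<Rightarrow> nat) \<Rightarrow> nat \<Rightarrow> nat \<Rightarrow> bool" where
  "ind_ek At \<pi> e k \<longleftrightarrow> (\<exists>i\<in>{1..length At}. At ! (i - 1) = e \<and> \<pi> i = k)"

end

theory Submission
  imports Defs
begin


lemma greedy_append: "greedy_aux E Ind acc (ys @ zs) = greedy_aux E Ind (greedy_aux E Ind acc ys) zs"
  by (induction ys arbitrary: acc) auto

lemma greedy_prefix: "\<exists>r. greedy_aux E Ind acc xs = acc @ r"
proof (induction xs arbitrary: acc)
  case Nil then show ?case by auto
next
  case (Cons a xs)
  then show ?case by (auto) (metis append_assoc)
qed

lemma greedy_set: "set (greedy_aux E Ind acc xs) \<subseteq> set acc \<union> set xs"
  by (induction xs arbitrary: acc) (auto, (fastforce split: if_splits)+)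

lemma greedy_distinct: "distinct acc \<Longrightarrow> distinct (greedy_aux E Ind acc xs)"
  by (induction xs arbitrary: acc) (auto simp: ext_set_def)

lemma greedy_ind: "set acc \<in> Ind \<Longrightarrow> set (greedy_aux E Ind acc xs) \<in> Ind"
  by (induction xs arbitrary: acc) (auto simp: ext_set_def)

lemma greedy_max:
  assumes down: "\<forall>X Y. Y \<in> Ind \<longrightarrow> X \<subseteq> Y \<longrightarrow> X \<in> Ind"
  shows "x \<in> set ys \<Longrightarrow> x \<in> E \<Longrightarrow> insert x (set (greedy_aux E Ind acc ys)) \<in> Ind
     \<Longrightarrow> x \<in> set (greedy_aux E Ind acc ys)"
proof (induction ys arbitrary: acc)
  case Nil then show ?case by simp
next
  case (Cons y ys)
  define acc1 where "acc1 = (if y \<in> ext_set E Ind (set acc) then acc @ [y] else acc)"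
  have R: "greedy_aux E Ind acc (y # ys) = greedy_aux E Ind acc1 ys" by (simp add: acc1_def)
  obtain r where r: "greedy_aux E Ind acc1 ys = acc1 @ r" using greedy_prefix by blast
  show ?case
  proof (cases "x \<in> set ys")
    case True then show ?thesis using Cons R by simp
  next
    case False
    then have xy: "x = y" using Cons by simp
    show ?thesis
    proof (cases "y \<in> ext_set E Ind (set acc)")
      case True then show ?thesis using R r xy by (simp add: acc1_def)
    next
      case f: False
      show ?thesis
      proof (cases "y \<in> set acc")
        case True then show ?thesis using R r f xy by (simp add: acc1_def)
      next
        case False
        with f xy Cons.prems have "insert y (set acc) \<notin> Ind" by (auto simp: ext_set_def)
        moreover have "insert y (set acc) \<subseteq> insert x (set (greedy_aux E Ind acc (y # ys)))"
          using R r f xy by (auto simp: acc1_def)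
        ultimately show ?thesis using down Cons.prems by blast
      qed
    qed
  qed
qed

lemma greedy_pos:
  assumes "distinct (ys @ e # zs)" "e \<in> set (greedy_aux E Ind [] (ys @ e # zs))"
  shows "\<exists>r. greedy_aux E Ind [] (ys @ e # zs) = greedy_aux E Ind [] ys @ e # r"
proof -
  let ?A1 = "greedy_aux E Ind [] ys"
  have eq: "greedy_aux E Ind [] (ys @ e # zs) = greedy_aux E Ind (greedy_aux E Ind ?A1 [e]) zs"
    by (simp add: greedy_append)
  show ?thesis
  proof (cases "e \<in> ext_set E Ind (set ?A1)")
    case True
    then obtain r where "greedy_aux E Ind (?A1 @ [e]) zs = (?A1 @ [e]) @ r" using greedy_prefix by blast
    then show ?thesis using eq True by auto
  next
    case False
    then have "greedy_aux E Ind [] (ys @ e # zs) = greedy_aux E Ind ?A1 zs" using eq by simp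
    moreover have "set (greedy_aux E Ind ?A1 zs) \<subseteq> set ys \<union> set zs"
      using greedy_set[of E Ind ?A1 zs] greedy_set[of E Ind "[]" ys] by auto
    ultimately show ?thesis using assms by auto
  qed
qed

lemma sum_idx:
  assumes "distinct xs"
  shows "(\<Sum>i\<in>{1..length xs}. f (xs ! (i - 1))) = (\<Sum>e\<in>set xs. f e)"
proof (rule sum.reindex_bij_betw)
  show "bij_betw (\<lambda>i. xs ! (i - 1)) {1..length xs} (set xs)"
  proof (rule bij_betwI')
    fix x y assume "x \<in> {1..length xs}" "y \<in> {1..length xs}"
    then show "(xs ! (x - 1) = xs ! (y - 1)) = (x = y)" using assms
      by (auto simp: nth_eq_iff_index_eq)
  next
    fix x assume "x \<in> {1..length xs}" then show "xs ! (x - 1) \<in> set xs" by auto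
  next
    fix y assume "y \<in> set xs"
    then obtain j where "j < length xs" "xs ! j = y" by (auto simp: in_set_conv_nth)
    then show "\<exists>x\<in>{1..length xs}. y = xs ! (x - 1)" by (intro bexI[of _ "j+1"]) auto
  qed
qed

lemma int_fw:
  assumes "prob_space P" "sets P = sets (Pi\<^sub>M E (\<lambda>_. borel))"
    "AE w in P. \<forall>e\<in>E. 0 \<le> w e \<and> w e \<le> (1::real)" "A \<subseteq> E" "finite A"
  shows "integrable P (\<lambda>w. fw A w) \<and> (\<integral>w. fw A w \<partial>P) = (\<Sum>e\<in>A. \<integral>w. w e \<partial>P)"
proof -
  interpret prob_space P by fact
  have int: "integrable P (\<lambda>w. w e)" if "e \<in> E" for e
  proof (rule integrable_const_bound[where B=1])
    show "AE x in P. norm (x e) \<le> 1" using assms(3) by eventually_elim (use that in auto)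
    have "(\<lambda>w. w e) \<in> measurable (Pi\<^sub>M E (\<lambda>_. borel)) borel"
      using measurable_component_singleton[OF that, of "\<lambda>_. borel"] by simp
    then show "(\<lambda>w. w e) \<in> borel_measurable P"
      using measurable_cong_sets[OF assms(2) refl] by blast
  qed
  have i2: "\<And>e. e \<in> A \<Longrightarrow> integrable P (\<lambda>w. w e)" using int assms(4) by blast
  show ?thesis unfolding fw_def
    using Bochner_Integration.integrable_sum[where I=A and M=P and f="\<lambda>e w. w e", OF i2] Bochner_Integration.integral_sum[where I=A and M=P and f="\<lambda>e w. w e", OF i2] by simp
qed


theorem theorem1:
  fixes L K t :: nat
    and Ind :: "nat set set"
    and P :: "(nat \<Rightarrow> real) measure"
    and ws :: "nat \<Rightarrow> nat \<Rightarrow> real"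
    and ord :: "nat \<Rightarrow> (nat \<Rightarrow> real) \<Rightarrow> nat list"
    and astar :: "nat list"
    and \<pi> :: "nat \<Rightarrow> nat"
  defines "E \<equiv> {1..L}"
    and "wbar \<equiv> (\<lambda>e. \<integral>w. w e \<partial>P)"
    and "At \<equiv> omm_A L Ind ord ws t"
    and "U \<equiv> omm_U L Ind ord ws t"
  assumes matroid: "matroid E Ind"
    and rank: "\<And>B. basis E Ind B \<Longrightarrow> card B = K"
    and P_prob: "prob_space P"
    and P_sets: "sets P = sets (Pi\<^sub>M E (\<lambda>_. borel))"
    and P_range: "AE w in P. \<forall>e\<in>E. 0 \<le> w e \<and> w e \<le> 1"
    and ws_range: "\<And>s e. e \<in> E \<Longrightarrow> 0 \<le> ws s e \<and> ws s e \<le> 1"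
    and ord_valid: "valid_order L ord"
    and astar_len: "length astar = K"
    and astar_distinct: "distinct astar"
    and astar_basis: "basis E Ind (set astar)"
    and astar_opt: "\<And>A. A \<in> Ind \<Longrightarrow> fw A wbar \<le> fw (set astar) wbar"
    and astar_sorted: "sorted_wrt (\<lambda>x y. wbar x \<ge> wbar y) astar"
    and t_pos: "t \<ge> 1"
    and pi_bij: "bij_betw \<pi> {1..K} {1..K}"
    and pi_exch: "\<And>k. k \<in> {1..K} \<Longrightarrow>
                    insert (astar ! (\<pi> k - 1)) (set (take (k - 1) At)) \<in> Ind"
    and pi_fix: "\<And>k i. k \<in> {1..K} \<Longrightarrow> i \<in> {1..K} \<Longrightarrow> At ! (k - 1) = astar ! (i - 1) \<Longrightarrow> \<pi> k = i"
  shows "(\<integral>w. fw (set astar) w - fw (set At) w \<partial>P)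
           \<le> (\<Sum>e\<in>E - set astar. \<Sum>k=1..Kgap wbar astar e.
                 gap wbar astar e k * (if ind_ek At \<pi> e k then 1 else 0))
       \<and> (\<forall>e\<in>E - set astar. \<forall>k\<in>{1..K}. ind_ek At \<pi> e k \<longrightarrow> U e \<ge> U (astar ! (k - 1)))
       \<and> (\<Sum>e\<in>E - set astar. \<Sum>k=1..Kgap wbar astar e. (if ind_ek At \<pi> e k then 1 else 0)) \<le> K
       \<and> (\<forall>e\<in>E - set astar. (\<Sum>k=1..Kgap wbar astar e. (if ind_ek At \<pi> e k then 1 else 0)) \<le> (1::nat))"
  proof -
  have down: "\<forall>X Y. Y \<in> Ind \<longrightarrow> X \<subseteq> Y \<longrightarrow> X \<in> Ind"
    and subE: "\<forall>X\<in>Ind. X \<subseteq> E" and emp: "{} \<in> Ind" and finE: "finite E"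
    using matroid unfolding matroid_def by blast+
  define xs where "xs = ord t U"
  have xs_set: "set xs = E" and xs_dist: "distinct xs" and xs_sorted: "sorted_wrt (\<lambda>x y. U x \<ge> U y) xs"
    using ord_valid unfolding valid_order_def xs_def E_def by blast+
  have At_eq: "At = greedy_aux E Ind [] xs"
    by (simp add: At_def U_def E_def xs_def omm_A_def greedy_def)
  have At_ind: "set At \<in> Ind" unfolding At_eq by (rule greedy_ind) (simp add: emp)
  have At_dist: "distinct At" unfolding At_eq by (rule greedy_distinct) simp
  have At_sub: "set At \<subseteq> E" using At_ind subE by blast
  have At_basis: "basis E Ind (set At)"
    unfolding basis_def
  proof (intro conjI ballI At_ind notI)
    fix e assume e: "e \<in> E - set At" and ins: "insert e (set At) \<in> Ind"
    have "e \<in> set At" unfolding At_eq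
      by (rule greedy_max[OF down]) (use e ins xs_set At_eq in auto)
    then show False using e by simp
  qed
  have lenAt: "length At = K" using rank[OF At_basis] At_dist by (simp add: distinct_card)
  have As_sub: "set astar \<subseteq> E" using astar_basis subE unfolding basis_def by blast
  have pi_in: "\<And>i. i \<in> {1..K} \<Longrightarrow> \<pi> i \<in> {1..K}" using pi_bij bij_betwE by blast
  have pi_inj: "inj_on \<pi> {1..K}" using pi_bij bij_betw_def by blast
  have uniq: "i = i'" if a: "i \<in> {1..K}" "i' \<in> {1..K}" "At ! (i - 1) = At ! (i' - 1)" for i i'
  proof -
    have "i - 1 < length At" "i' - 1 < length At" using lenAt a by auto
    then have "i - 1 = i' - 1" using nth_eq_iff_index_eq[OF At_dist] a by blast
    then show "i = i'" using a by auto
  qed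
  have keyU: "U (astar ! (\<pi> i - 1)) \<le> U (At ! (i - 1))" if i: "i \<in> {1..K}" for i
  proof (rule ccontr)
    define e where "e = At ! (i - 1)"
    define x where "x = astar ! (\<pi> i - 1)"
    assume "\<not> U (astar ! (\<pi> i - 1)) \<le> U (At ! (i - 1))"
    then have lt: "U e < U x" by (simp add: e_def x_def)
    then have xe: "x \<noteq> e" by auto
    have eAt: "e \<in> set At" using i lenAt by (auto simp: e_def)
    then have "e \<in> set xs" using At_sub xs_set by auto
    then obtain ys zs where xs_split: "xs = ys @ e # zs" by (meson split_list)
    obtain r where r: "At = greedy_aux E Ind [] ys @ e # r"
      using greedy_pos[of ys e zs E Ind] xs_dist eAt At_eq xs_split by auto
    define A1 where "A1 = greedy_aux E Ind [] ys"
    have "At ! length A1 = e" using r by (simp add: A1_def)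
    then have a: "At ! length A1 = At ! (i - 1)" by (simp add: e_def)
    have "length A1 = i - 1"
    proof -
      have "length A1 < length At" using r by (simp add: A1_def)
      moreover have "i - 1 < length At" using i lenAt by auto
      ultimately show "length A1 = i - 1" using nth_eq_iff_index_eq[OF At_dist] a by blast
    qed
    then have take_eq: "take (i - 1) At = A1" using r by (simp add: A1_def)
    have xpos: "\<pi> i - 1 < length astar" using pi_in[OF i] astar_len by auto
    have "x \<in> set xs" using xs_set As_sub xpos by (auto simp: x_def)
    moreover have "x \<notin> set zs"
    proof
      assume "x \<in> set zs"
      then have "U e \<ge> U x" using xs_sorted xs_split by (simp add: sorted_wrt_append)
      then show False using lt by simp
    qed
    ultimately have xys: "x \<in> set ys" using xs_split xe by auto
    have ins: "insert x (set A1) \<in> Ind" using pi_exch[OF i] take_eq by (simp add: x_def)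
    have "x \<in> set A1" unfolding A1_def
      by (rule greedy_max[OF down]) (use xys ins xs_set As_sub xpos x_def A1_def in auto)
    then obtain j where j: "j < length A1" "A1 ! j = x" by (auto simp: in_set_conv_nth)
    then have "At ! (Suc j - 1) = astar ! (\<pi> i - 1)" using r by (simp add: A1_def nth_append x_def)
    moreover have "Suc j \<in> {1..K}" using j \<open>length A1 = i - 1\<close> i by auto
    ultimately have "\<pi> (Suc j) = \<pi> i" using pi_fix pi_in[OF i] by blast
    then have "Suc j = i" using pi_inj \<open>Suc j \<in> {1..K}\<close> i by (meson inj_onD)
    then show False using j \<open>length A1 = i - 1\<close> by simp
  qed
  define \<phi> where "\<phi> e = \<pi> (SOME i. i \<in> {1..K} \<and> At ! (i - 1) = e)" for e
  have phi_at: "\<phi> (At ! (i - 1)) = \<pi> i" if i: "i \<in> {1..K}" for i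
  proof -
    have "(SOME i'. i' \<in> {1..K} \<and> At ! (i' - 1) = At ! (i - 1)) = i"
      using uniq i by (intro some_equality) auto
    then show ?thesis by (simp add: \<phi>_def)
  qed
  have ind_iff: "ind_ek At \<pi> e k \<longleftrightarrow> e \<in> set At \<and> k = \<phi> e" for e k
  proof
    assume "ind_ek At \<pi> e k"
    then obtain i where "i \<in> {1..K}" "At ! (i - 1) = e" "\<pi> i = k"
      unfolding ind_ek_def lenAt by blast
    then show "e \<in> set At \<and> k = \<phi> e" using phi_at lenAt by force
  next
    assume a: "e \<in> set At \<and> k = \<phi> e"
    then obtain j where "j < K" "At ! j = e" using lenAt by (auto simp: in_set_conv_nth)
    then show "ind_ek At \<pi> e k" unfolding ind_ek_def lenAt using phi_at[of "Suc j"] a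
      by (intro bexI[of _ "Suc j"]) auto
  qed
  have phi_in: "e \<in> set At \<Longrightarrow> \<phi> e \<in> {1..K}" for e
  proof -
    assume "e \<in> set At"
    then obtain j where j: "j < K" "At ! j = e" using lenAt by (auto simp: in_set_conv_nth)
    then have "Suc j \<in> {1..K}" by auto
    then show ?thesis using phi_at[of "Suc j"] pi_in[of "Suc j"] j by simp
  qed
  have gap_pos: "k \<le> Kgap wbar astar e" if k: "k \<in> {1..K}" and g: "gap wbar astar e k > 0" for e k
  proof -
    have "{1..k} \<subseteq> {k' \<in> {1..length astar}. gap wbar astar e k' > 0}"
    proof
      fix k' assume k': "k' \<in> {1..k}"
      have "wbar (astar ! (k' - 1)) \<ge> wbar (astar ! (k - 1))"
      proof (cases "k' = k")
        case False
        then show ?thesis using sorted_wrt_nth_less[OF astar_sorted, of "k' - 1" "k - 1"] k k' astar_len by auto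
      qed simp
      then show "k' \<in> {k' \<in> {1..length astar}. gap wbar astar e k' > 0}"
        using g k k' astar_len by (auto simp: gap_def)
    qed
    then have "card {1..k} \<le> Kgap wbar astar e" unfolding Kgap_def by (intro card_mono) simp_all
    then show ?thesis by simp
  qed
  have Kg_le: "Kgap wbar astar e \<le> K" for e
  proof -
    have "Kgap wbar astar e \<le> card {1..K}" unfolding Kgap_def astar_len by (intro card_mono) auto
    then show ?thesis by simp
  qed
  have inner_real: "(\<Sum>k=1..Kgap wbar astar e. gap wbar astar e k * (if ind_ek At \<pi> e k then 1 else 0))
      = (if e \<in> set At \<and> \<phi> e \<le> Kgap wbar astar e then gap wbar astar e (\<phi> e) else 0)" for e
  proof -
    have "(\<Sum>k=1..Kgap wbar astar e. gap wbar astar e k * (if ind_ek At \<pi> e k then 1 else 0))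
       = (\<Sum>k=1..Kgap wbar astar e. if k = \<phi> e then (if e \<in> set At then gap wbar astar e k else 0) else 0)"
      by (rule sum.cong) (auto simp: ind_iff)
    also have "\<dots> = (if e \<in> set At \<and> \<phi> e \<le> Kgap wbar astar e then gap wbar astar e (\<phi> e) else 0)"
      using phi_in[of e] by (auto simp: sum.delta)
    finally show ?thesis .
  qed
  have inner_nat: "(\<Sum>k=1..Kgap wbar astar e. (if ind_ek At \<pi> e k then 1 else 0))
      = (if e \<in> set At \<and> \<phi> e \<le> Kgap wbar astar e then 1 else (0::nat))" for e
  proof -
    have "(\<Sum>k=1..Kgap wbar astar e. (if ind_ek At \<pi> e k then 1 else (0::nat)))
       = (\<Sum>k=1..Kgap wbar astar e. if k = \<phi> e then (if e \<in> set At then 1 else 0) else 0)"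
      by (rule sum.cong) (auto simp: ind_iff)
    also have "\<dots> = (if e \<in> set At \<and> \<phi> e \<le> Kgap wbar astar e then 1 else 0)"
      using phi_in[of e] by (auto simp: sum.delta)
    finally show ?thesis .
  qed
  have finAs: "finite (set astar)" by simp
  obtain i1 e1 where
    "integrable P (\<lambda>w. fw (set astar) w)" "(\<integral>w. fw (set astar) w \<partial>P) = (\<Sum>e\<in>set astar. wbar e)"
    using int_fw[OF P_prob P_sets P_range As_sub finAs] wbar_def by auto
  moreover have
    "integrable P (\<lambda>w. fw (set At) w)" "(\<integral>w. fw (set At) w \<partial>P) = (\<Sum>e\<in>set At. wbar e)"
    using int_fw[OF P_prob P_sets P_range At_sub] wbar_def by auto
  ultimately have LHS: "(\<integral>w. fw (set astar) w - fw (set At) w \<partial>P) = fw (set astar) wbar - fw (set At) wbar"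
    by (simp add: fw_def)
  have fA: "fw (set astar) wbar = (\<Sum>i\<in>{1..K}. wbar (astar ! (\<pi> i - 1)))"
  proof -
    have "fw (set astar) wbar = (\<Sum>k\<in>{1..K}. wbar (astar ! (k - 1)))"
      unfolding fw_def using sum_idx[OF astar_distinct, of wbar] astar_len by simp
    also have "\<dots> = (\<Sum>i\<in>{1..K}. wbar (astar ! (\<pi> i - 1)))"
      using sum.reindex_bij_betw[OF pi_bij, of "\<lambda>k. wbar (astar ! (k - 1))"] by simp
    finally show ?thesis .
  qed
  have fAt: "fw (set At) wbar = (\<Sum>i\<in>{1..K}. wbar (At ! (i - 1)))"
    unfolding fw_def using sum_idx[OF At_dist, of wbar] lenAt by simp
  define G where "G e = (if e \<notin> set astar \<and> \<phi> e \<le> Kgap wbar astar e then gap wbar astar e (\<phi> e) else 0)" for e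
  have term_le: "wbar (astar ! (\<pi> i - 1)) - wbar (At ! (i - 1)) \<le> G (At ! (i - 1))" if i: "i \<in> {1..K}" for i
  proof (cases "At ! (i - 1) \<in> set astar")
    case True
    then obtain j where j: "j < K" "astar ! j = At ! (i - 1)" using astar_len by (auto simp: in_set_conv_nth)
    then have "\<pi> i = Suc j" using pi_fix[OF i, of "Suc j"] by auto
    then show ?thesis using j True by (simp add: G_def)
  next
    case False
    have gq: "wbar (astar ! (\<pi> i - 1)) - wbar (At ! (i - 1)) = gap wbar astar (At ! (i - 1)) (\<pi> i)"
      by (simp add: gap_def)
    show ?thesis
    proof (cases "\<pi> i \<le> Kgap wbar astar (At ! (i - 1))")
      case True then show ?thesis using False gq phi_at[OF i] by (simp add: G_def)
    next
      case c: False
      then have "\<not> gap wbar astar (At ! (i - 1)) (\<pi> i) > 0" using gap_pos pi_in[OF i] by fastforce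
      then show ?thesis using False c gq phi_at[OF i] by (simp add: G_def)
    qed
  qed
  have "(\<integral>w. fw (set astar) w - fw (set At) w \<partial>P) = (\<Sum>i\<in>{1..K}. wbar (astar ! (\<pi> i - 1)) - wbar (At ! (i - 1)))"
    using LHS fA fAt by (simp add: sum_subtractf)
  also have "\<dots> \<le> (\<Sum>i\<in>{1..K}. G (At ! (i - 1)))" by (rule sum_mono) (rule term_le)
  also have "\<dots> = (\<Sum>e\<in>set At. G e)" using sum_idx[OF At_dist, of G] lenAt by simp
  also have "\<dots> = (\<Sum>e\<in>E - set astar. (if e \<in> set At \<and> \<phi> e \<le> Kgap wbar astar e then gap wbar astar e (\<phi> e) else 0))"
  proof -
    have "(\<Sum>e\<in>set At. G e) = (\<Sum>e\<in>E. if e \<in> set At then G e else 0)"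
      by (rule sum.mono_neutral_cong_left) (use finE At_sub in auto)
    also have "\<dots> = (\<Sum>e\<in>E - set astar. (if e \<in> set At \<and> \<phi> e \<le> Kgap wbar astar e then gap wbar astar e (\<phi> e) else 0))"
      by (rule sum.mono_neutral_cong_right) (use finE in \<open>auto simp: G_def\<close>)
    finally show ?thesis .
  qed
  also have "\<dots> = (\<Sum>e\<in>E - set astar. \<Sum>k=1..Kgap wbar astar e.
                 gap wbar astar e k * (if ind_ek At \<pi> e k then 1 else 0))"
    by (rule sum.cong[OF refl]) (rule inner_real[symmetric])
  finally have P1: "(\<integral>w. fw (set astar) w - fw (set At) w \<partial>P)
           \<le> (\<Sum>e\<in>E - set astar. \<Sum>k=1..Kgap wbar astar e.
                 gap wbar astar e k * (if ind_ek At \<pi> e k then 1 else 0))" .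
  have P2: "\<forall>e\<in>E - set astar. \<forall>k\<in>{1..K}. ind_ek At \<pi> e k \<longrightarrow> U e \<ge> U (astar ! (k - 1))"
  proof (intro ballI impI)
    fix e k assume "ind_ek At \<pi> e k"
    then obtain i where "i \<in> {1..K}" "At ! (i - 1) = e" "\<pi> i = k"
      unfolding ind_ek_def lenAt by blast
    then show "U e \<ge> U (astar ! (k - 1))" using keyU by blast
  qed
  have P3: "(\<Sum>e\<in>E - set astar. \<Sum>k=1..Kgap wbar astar e. (if ind_ek At \<pi> e k then 1 else 0)) \<le> K"
  proof -
    have "(\<Sum>e\<in>E - set astar. \<Sum>k=1..Kgap wbar astar e. (if ind_ek At \<pi> e k then 1 else 0))
        \<le> (\<Sum>e\<in>E. if e \<in> set At then 1 else (0::nat))"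
      unfolding inner_nat
      by (rule order_trans[OF sum_mono sum_mono2]) (use finE in auto)
    also have "\<dots> = card (set At)" using finE At_sub
      by (simp add: sum.If_cases Int_absorb1)
    finally show ?thesis using lenAt At_dist by (simp add: distinct_card)
  qed
  have P4: "\<forall>e\<in>E - set astar. (\<Sum>k=1..Kgap wbar astar e. (if ind_ek At \<pi> e k then 1 else 0)) \<le> (1::nat)"
    unfolding inner_nat by simp
  show ?thesis using P1 P2 P3 P4 by blast
qed

end
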